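(* Let $M_0$ be a matroid on a finite set $E$ and let $\mathcal{C}_0$ be the family of all non-spanning circuits of $M_0$. Then the free elevation of $M_0$ is a maximal $\mathcal{C}_0$-matroid on $E$. That is, it is a $\mathcal{C}_0$-matroid, and no $\mathcal{C}_0$-matroid on $E$ is strictly larger in the weak order.
   Context: A $\mathcal{C}$-matroid on $E$ is a matroid on $E$ in which every member of $\mathcal{C}$ is a circuit. The weak order is defined by $M_1\preceq M_2$ if every independent set of $M_1$ is independent in $M_2$. $M$ is the truncation of $N$ if $r_N(E)=r_M(E)+1$ and $r_M(X)=\min\{r_N(X),r_M(E)\}$ for all $X$. An erection of $M$ is any such $N$, or $M$ itself (the trivial erection). The free erection is the maximum of the lattice of erections of $M$ under the weak order. The free elevation of $M_0$ is obtained by repeatedly taking non-trivial free erections until a matroid with no non-trivial erection is reached. *)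

theory Defs
  imports Main
begin

definition matroid :: "'a set \<Rightarrow> 'a set set \<Rightarrow> bool" where
  "matroid E I \<longleftrightarrow> finite E \<and> I \<subseteq> Pow E \<and> {} \<in> I
     \<and> (\<forall>X Y. Y \<in> I \<longrightarrow> X \<subseteq> Y \<longrightarrow> X \<in> I)
     \<and> (\<forall>X Y. X \<in> I \<longrightarrow> Y \<in> I \<longrightarrow> card X < card Y \<longrightarrow> (\<exists>y\<in>Y - X. insert y X \<in> I))"

definition rank :: "'a set set \<Rightarrow> 'a set \<Rightarrow> nat" where
  "rank I X = Max (card ` {Y \<in> I. Y \<subseteq> X})"

definition circuit :: "'a set \<Rightarrow> 'a set set \<Rightarrow> 'a set \<Rightarrow> bool" where
  "circuit E I C \<longleftrightarrow> C \<subseteq> E \<and> C \<notin> I \<and> (\<forall>D. D \<subset> C \<longrightarrow> D \<in> I)"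

definition C_matroid :: "'a set \<Rightarrow> 'a set set \<Rightarrow> 'a set set \<Rightarrow> bool" where
  "C_matroid E \<C> I \<longleftrightarrow> matroid E I \<and> (\<forall>C\<in>\<C>. circuit E I C)"

text \<open>Weak order: M1 \<preceq> M2 iff every independent set of M1 is independent in M2,
  i.e. inclusion of the families of independent sets.\<close>

definition is_truncation :: "'a set \<Rightarrow> 'a set set \<Rightarrow> 'a set set \<Rightarrow> bool" where
  "is_truncation E M N \<longleftrightarrow> matroid E M \<and> matroid E N \<and> rank N E = rank M E + 1
     \<and> (\<forall>X. X \<subseteq> E \<longrightarrow> rank M X = min (rank N X) (rank M E))"

definition is_erection :: "'a set \<Rightarrow> 'a set set \<Rightarrow> 'a set set \<Rightarrow> bool" where
  "is_erection E M N \<longleftrightarrow> is_truncation E M N \<or> N = M"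

definition free_erection :: "'a set \<Rightarrow> 'a set set \<Rightarrow> 'a set set" where
  "free_erection E M = (THE N. is_erection E M N \<and> (\<forall>N'. is_erection E M N' \<longrightarrow> N' \<subseteq> N))"

primrec erection_seq :: "'a set \<Rightarrow> 'a set set \<Rightarrow> nat \<Rightarrow> 'a set set" where
  "erection_seq E M0 0 = M0"
| "erection_seq E M0 (Suc n) = free_erection E (erection_seq E M0 n)"

definition free_elevation :: "'a set \<Rightarrow> 'a set set \<Rightarrow> 'a set set" where
  "free_elevation E M0 =
     erection_seq E M0 (LEAST n. \<not> (\<exists>N. is_truncation E (erection_seq E M0 n) N))"

end

theory Submission
  imports Defs
begin

definition trunc :: "nat \<Rightarrow> 'a set set \<Rightarrow> 'a set set" where
  "trunc k N = {X \<in> N. card X \<le> k}"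

lemma mfin: "matroid E I \<Longrightarrow> finite E" unfolding matroid_def by auto
lemma mpow: "matroid E I \<Longrightarrow> I \<subseteq> Pow E" unfolding matroid_def by auto
lemma memp: "matroid E I \<Longrightarrow> {} \<in> I" unfolding matroid_def by auto
lemma mdown: "matroid E I \<Longrightarrow> Y \<in> I \<Longrightarrow> X \<subseteq> Y \<Longrightarrow> X \<in> I" unfolding matroid_def by auto
lemma maug: "matroid E I \<Longrightarrow> X \<in> I \<Longrightarrow> Y \<in> I \<Longrightarrow> card X < card Y \<Longrightarrow> \<exists>y\<in>Y - X. insert y X \<in> I"
  unfolding matroid_def by auto
lemma mfinI: "matroid E I \<Longrightarrow> finite I"
proof -
  assume m: "matroid E I"
  have "finite (Pow E)" using mfin[OF m] by simp
  then show ?thesis using mpow[OF m] finite_subset by blast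
qed
lemma mfinX: "matroid E I \<Longrightarrow> X \<in> I \<Longrightarrow> finite X"
proof -
  assume m: "matroid E I" and "X \<in> I"
  then have "X \<subseteq> E" using mpow[OF m] by blast
  then show ?thesis using mfin[OF m] finite_subset by blast
qed

lemma rank_ge: "matroid E I \<Longrightarrow> Y \<in> I \<Longrightarrow> Y \<subseteq> X \<Longrightarrow> card Y \<le> rank I X"
proof -
  assume m: "matroid E I" and "Y \<in> I" "Y \<subseteq> X"
  have "finite (card ` {Y \<in> I. Y \<subseteq> X})" using mfinI[OF m] by simp
  then show ?thesis unfolding rank_def using \<open>Y \<in> I\<close> \<open>Y \<subseteq> X\<close> by (intro Max_ge) auto
qed

lemma rank_wit: "matroid E I \<Longrightarrow> \<exists>Y\<in>I. Y \<subseteq> X \<and> card Y = rank I X"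
proof -
  assume m: "matroid E I"
  have "rank I X \<in> card ` {Y \<in> I. Y \<subseteq> X}"
    unfolding rank_def by (rule Max_in) (use mfinI[OF m] memp[OF m] in auto)
  then show ?thesis by auto
qed

lemma rank_le_card: "matroid E I \<Longrightarrow> finite X \<Longrightarrow> rank I X \<le> card X"
proof -
  assume m: "matroid E I" and f: "finite X"
  obtain Y where "Y \<in> I" "Y \<subseteq> X" "card Y = rank I X" using rank_wit[OF m] by blast
  then show ?thesis using card_mono[OF f] by metis
qed

lemma indep_iff_rank: "matroid E I \<Longrightarrow> X \<subseteq> E \<Longrightarrow> X \<in> I \<longleftrightarrow> rank I X = card X"
proof
  assume m: "matroid E I" and XE: "X \<subseteq> E"
  have fX: "finite X" using mfin[OF m] XE finite_subset by blast
  { assume "X \<in> I" then show "rank I X = card X"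
      using rank_ge[OF m, of X X] rank_le_card[OF m fX] by simp }
  { assume r: "rank I X = card X"
    obtain Y where "Y \<in> I" "Y \<subseteq> X" "card Y = rank I X" using rank_wit[OF m] by blast
    then show "X \<in> I" using r card_subset_eq[OF fX] by metis }
qed

lemma rank_eq_k: "matroid E I \<Longrightarrow> \<forall>X\<in>I. card X \<le> k \<Longrightarrow> Y \<in> I \<Longrightarrow> card Y = k \<Longrightarrow> rank I E = k"
proof -
  assume m: "matroid E I" and b: "\<forall>X\<in>I. card X \<le> k" and Y: "Y \<in> I" "card Y = k"
  have "card Y \<le> rank I E" using rank_ge[OF m Y(1)] mpow[OF m] Y(1) by blast
  moreover obtain Z where "Z \<in> I" "card Z = rank I E" using rank_wit[OF m] by blast
  ultimately show ?thesis using b Y(2) by force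
qed

lemma card_le_rankE: "matroid E I \<Longrightarrow> X \<in> I \<Longrightarrow> card X \<le> rank I E"
  using rank_ge[of E I X E] mpow[of E I] by blast

lemma trunc_matroid: "matroid E N \<Longrightarrow> matroid E (trunc k N)"
proof -
  assume m: "matroid E N"
  show ?thesis unfolding matroid_def trunc_def
  proof (intro conjI allI impI)
    show "finite E" using mfin[OF m] .
    show "{X \<in> N. card X \<le> k} \<subseteq> Pow E" using mpow[OF m] by auto
    show "{} \<in> {X \<in> N. card X \<le> k}" using memp[OF m] by auto
    fix X Y
    { assume "Y \<in> {X \<in> N. card X \<le> k}" "X \<subseteq> Y"
      then have "X \<in> N" "card X \<le> card Y" using mdown[OF m] card_mono[OF mfinX[OF m]] by auto
      then show "X \<in> {X \<in> N. card X \<le> k}" using \<open>Y \<in> {X \<in> N. card X \<le> k}\<close> by auto }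
    { assume X: "X \<in> {X \<in> N. card X \<le> k}" and Y: "Y \<in> {X \<in> N. card X \<le> k}" and c: "card X < card Y"
      then obtain y where y: "y \<in> Y - X" "insert y X \<in> N" using maug[OF m] by blast
      have "card (insert y X) = card X + 1" using y mfinX[OF m] X by auto
      then show "\<exists>y\<in>Y - X. insert y X \<in> {X \<in> N. card X \<le> k}" using y c Y by auto }
  qed
qed


lemma trunc_trunc: "j \<le> k \<Longrightarrow> trunc j (trunc k N) = trunc j N"
  unfolding trunc_def by auto

lemma trunc_sub: "trunc k N \<subseteq> N" unfolding trunc_def by auto

lemma trunc_iff: "is_truncation E M N \<longleftrightarrow>
   matroid E M \<and> matroid E N \<and> rank N E = rank M E + 1 \<and> M = trunc (rank M E) N"
proof
  assume t: "is_truncation E M N"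
  then have mM: "matroid E M" and mN: "matroid E N" and rk: "rank N E = rank M E + 1"
    and eq: "\<And>X. X \<subseteq> E \<Longrightarrow> rank M X = min (rank N X) (rank M E)"
    unfolding is_truncation_def by blast+
  have "M = trunc (rank M E) N"
  proof (intro set_eqI iffI)
    fix X assume X: "X \<in> M"
    have XE: "X \<subseteq> E" using mpow[OF mM] X by blast
    have fX: "finite X" using mfinX[OF mM X] .
    have "rank M X = card X" using indep_iff_rank[OF mM XE] X by simp
    then have "card X \<le> rank M E" "card X \<le> rank N X" using eq[OF XE] by auto
    moreover have "rank N X \<le> card X" using rank_le_card[OF mN fX] .
    ultimately show "X \<in> trunc (rank M E) N"
      unfolding trunc_def using indep_iff_rank[OF mN XE] by auto
  next
    fix X assume X: "X \<in> trunc (rank M E) N"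
    then have XN: "X \<in> N" and c: "card X \<le> rank M E" unfolding trunc_def by auto
    have XE: "X \<subseteq> E" using mpow[OF mN] XN by blast
    have "rank N X = card X" using indep_iff_rank[OF mN XE] XN by simp
    then have "rank M X = card X" using eq[OF XE] c by simp
    then show "X \<in> M" using indep_iff_rank[OF mM XE] by simp
  qed
  then show "matroid E M \<and> matroid E N \<and> rank N E = rank M E + 1 \<and> M = trunc (rank M E) N"
    using mM mN rk by blast
next
  assume "matroid E M \<and> matroid E N \<and> rank N E = rank M E + 1 \<and> M = trunc (rank M E) N"
  then have mM: "matroid E M" and mN: "matroid E N" and rk: "rank N E = rank M E + 1"
    and eq0: "M = trunc (rank M E) N" by blast+
  define r where "r = rank M E"
  have eq: "M = trunc r N" unfolding r_def by (rule eq0)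
  have "rank M X = min (rank N X) (rank M E)" if XE: "X \<subseteq> E" for X
  proof (rule antisym)
    obtain Y where Y: "Y \<in> M" "Y \<subseteq> X" "card Y = rank M X" using rank_wit[OF mM] by blast
    have "Y \<in> N" "card Y \<le> r" using Y(1) eq unfolding trunc_def by auto
    then show "rank M X \<le> min (rank N X) (rank M E)"
      using rank_ge[OF mN _ Y(2)] Y(3) unfolding r_def[symmetric] by auto
  next
    obtain Z where Z: "Z \<in> N" "Z \<subseteq> X" "card Z = rank N X" using rank_wit[OF mN] by blast
    have fZ: "finite Z" using mfinX[OF mN Z(1)] .
    obtain Z' where Z': "Z' \<subseteq> Z" "card Z' = min (card Z) r"
      using obtain_subset_with_card_n[of "min (card Z) r" Z] by auto
    have "Z' \<in> N" using mdown[OF mN Z(1) Z'(1)] .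
    then have "Z' \<in> M" using eq Z'(2) unfolding trunc_def by auto
    then have "card Z' \<le> rank M X" using rank_ge[OF mM] Z'(1) Z(2) by blast
    then show "min (rank N X) (rank M E) \<le> rank M X" using Z' Z(3) unfolding r_def[symmetric] by simp
  qed
  then show "is_truncation E M N" unfolding is_truncation_def using mM mN rk by blast
qed

lemma trD: assumes "is_truncation E M N"
  shows "matroid E M" "matroid E N" "rank N E = rank M E + 1" "M = trunc (rank M E) N"
proof -
  note h = trunc_iff[THEN iffD1, OF assms]
  show "matroid E M" by (rule h[THEN conjunct1])
  show "matroid E N" by (rule h[THEN conjunct2, THEN conjunct1])
  show "rank N E = rank M E + 1" by (rule h[THEN conjunct2, THEN conjunct2, THEN conjunct1])
  show "M = trunc (rank M E) N" by (rule h[THEN conjunct2, THEN conjunct2, THEN conjunct2])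
qed

lemma union_matroid:
  assumes m1: "matroid E N1" and m2: "matroid E N2"
    and b: "\<forall>X\<in>N1 \<union> N2. card X \<le> r + 1" and t: "trunc r N1 = trunc r N2"
  shows "matroid E (N1 \<union> N2)"
  unfolding matroid_def
proof (intro conjI allI impI)
  show "finite E" using mfin[OF m1] .
  show "N1 \<union> N2 \<subseteq> Pow E" using mpow[OF m1] mpow[OF m2] by auto
  show "{} \<in> N1 \<union> N2" using memp[OF m1] by auto
  fix X Y
  { assume "Y \<in> N1 \<union> N2" "X \<subseteq> Y"
    then show "X \<in> N1 \<union> N2" using mdown[OF m1] mdown[OF m2] by blast }
  { assume X: "X \<in> N1 \<union> N2" and Y: "Y \<in> N1 \<union> N2" and c: "card X < card Y"
    have "card Y \<le> r + 1" using b Y by blast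
    then have "card X \<le> r" using c by linarith
    then have "X \<in> trunc r N1 \<union> trunc r N2" using X unfolding trunc_def by auto
    then have X12: "X \<in> N1" "X \<in> N2" using t trunc_sub by blast+
    show "\<exists>y\<in>Y - X. insert y X \<in> N1 \<union> N2"
    proof (cases "Y \<in> N1")
      case True
      then show ?thesis using maug[OF m1 X12(1) True c] by blast
    next
      case False
      then have "Y \<in> N2" using Y by blast
      then show ?thesis using maug[OF m2 X12(2) _ c] by blast
    qed }
qed

lemma er_matroid: "matroid E M \<Longrightarrow> is_erection E M N \<Longrightarrow> matroid E N"
  unfolding is_erection_def using trD(2) by blast

lemma er_sub: "is_erection E M N \<Longrightarrow> M \<subseteq> N"
proof -
  assume "is_erection E M N"
  then have "is_truncation E M N \<or> N = M" unfolding is_erection_def .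
  then show ?thesis
  proof
    assume "is_truncation E M N"
    then have "M = trunc (rank M E) N" by (rule trD)
    moreover have "trunc (rank M E) N \<subseteq> N" by (rule trunc_sub)
    ultimately show ?thesis by (rule ssubst[where P="\<lambda>X. X \<subseteq> N"])
  qed simp
qed

lemma tr_bound: "is_truncation E M N \<Longrightarrow> X \<in> N \<Longrightarrow> card X \<le> rank M E + 1"
proof -
  assume t: "is_truncation E M N" and X: "X \<in> N"
  then have "matroid E N" "rank N E = rank M E + 1" using trD(2,3) by blast+
  then show ?thesis using card_le_rankE[of E N X] X by simp
qed

lemma er_union:
  assumes m: "matroid E M" and e1: "is_erection E M N1" and e2: "is_erection E M N2"
  shows "is_erection E M (N1 \<union> N2)"
proof (cases "N1 = M \<or> N2 = M")
  case True
  then show ?thesis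
  proof
    assume "N1 = M" then have "N1 \<union> N2 = N2" using er_sub[OF e2] by blast
    then show ?thesis using e2 by simp
  next
    assume "N2 = M" then have "N1 \<union> N2 = N1" using er_sub[OF e1] by blast
    then show ?thesis using e1 by simp
  qed
next
  case False
  then have t1: "is_truncation E M N1" and t2: "is_truncation E M N2"
    using e1 e2 unfolding is_erection_def by auto
  have m1: "matroid E N1" and m2: "matroid E N2" using trD(2)[OF t1] trD(2)[OF t2] by auto
  have r1: "rank N1 E = rank M E + 1" and q1: "M = trunc (rank M E) N1" using trD[OF t1] by blast+
  have q2: "M = trunc (rank M E) N2" using trD[OF t2] by blast
  have b: "\<forall>X\<in>N1 \<union> N2. card X \<le> rank M E + 1" using tr_bound[OF t1] tr_bound[OF t2] by blast
  have "trunc (rank M E) N1 = trunc (rank M E) N2" using q1 q2 by (rule trans[OF sym])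
  then have mu: "matroid E (N1 \<union> N2)" using union_matroid[OF m1 m2 b] by blast
  obtain Y where Y: "Y \<in> N1" "card Y = rank N1 E" using rank_wit[OF m1] by blast
  have ru: "rank (N1 \<union> N2) E = rank M E + 1"
    using rank_eq_k[OF mu b, of Y] Y r1 by simp
  have "trunc (rank M E) (N1 \<union> N2) = trunc (rank M E) N1 \<union> trunc (rank M E) N2"
    unfolding trunc_def by blast
  then have "M = trunc (rank M E) (N1 \<union> N2)" using q1[symmetric] q2[symmetric] by simp
  then have "is_truncation E M (N1 \<union> N2)" unfolding trunc_iff using m mu ru by blast
  then show ?thesis unfolding is_erection_def by simp
qed

lemma fe:
  assumes m: "matroid E M"
  shows "is_erection E M (free_erection E M) \<and> (\<forall>N'. is_erection E M N' \<longrightarrow> N' \<subseteq> free_erection E M)"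
proof -
  let ?S = "{N. is_erection E M N}"
  have "?S \<subseteq> Pow (Pow E)" using er_matroid[OF m] mpow by blast
  moreover have "finite (Pow (Pow E))" using mfin[OF m] by simp
  ultimately have fS: "finite ?S" using finite_subset by blast
  have "M \<in> ?S" unfolding is_erection_def by simp
  then obtain Nm where Nm: "Nm \<in> ?S" "\<forall>b\<in>?S. Nm \<le> b \<longrightarrow> Nm = b"
    using finite_has_maximal[OF fS] by blast
  have P: "is_erection E M Nm \<and> (\<forall>N'. is_erection E M N' \<longrightarrow> N' \<subseteq> Nm)"
  proof (intro conjI allI impI)
    show "is_erection E M Nm" using Nm by simp
    fix N' assume "is_erection E M N'"
    then have "Nm \<union> N' \<in> ?S" using er_union[OF m] Nm(1) by simp
    then have "Nm = Nm \<union> N'" using Nm(2) by blast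
    then show "N' \<subseteq> Nm" by blast
  qed
  have "\<exists>!N. is_erection E M N \<and> (\<forall>N'. is_erection E M N' \<longrightarrow> N' \<subseteq> N)"
    using P by blast
  then show ?thesis unfolding free_erection_def by (rule theI')
qed

lemma fe_nontriv:
  assumes m: "matroid E M" and t: "is_truncation E M N"
  shows "is_truncation E M (free_erection E M)"
proof (rule ccontr)
  assume a: "\<not> is_truncation E M (free_erection E M)"
  have "is_erection E M N" using t unfolding is_erection_def by simp
  then have "N \<subseteq> free_erection E M" using fe[OF m] by blast
  moreover have "free_erection E M = M" using fe[OF m] a unfolding is_erection_def by blast
  ultimately have NM: "N \<subseteq> M" by simp
  have mN: "matroid E N" and r: "rank N E = rank M E + 1" using trD[OF t] by blast+
  obtain Y where "Y \<in> N" "card Y = rank N E" using rank_wit[OF mN] by blast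
  then show False using card_le_rankE[OF m, of Y] NM r by auto
qed

lemma TR:
  assumes mN: "matroid E N" and mM: "matroid E M" and eq: "M = trunc (rank M E) N"
    and Y: "Y \<in> N" "card Y = rank M E + 1"
  shows "is_truncation E M (trunc (rank M E + 1) N)"
proof -
  have mt: "matroid E (trunc (rank M E + 1) N)" using trunc_matroid[OF mN] .
  have "rank (trunc (rank M E + 1) N) E = rank M E + 1"
    by (rule rank_eq_k[OF mt, of _ Y]) (use Y in \<open>auto simp: trunc_def\<close>)
  moreover have "trunc (rank M E) (trunc (rank M E + 1) N) = M"
    using eq[symmetric] trunc_trunc[of "rank M E" "rank M E + 1" N] by simp
  ultimately show ?thesis unfolding trunc_iff using mM mt by auto
qed


lemma trunc_mem: "M = trunc r N \<Longrightarrow> X \<in> M \<longleftrightarrow> X \<in> N \<and> card X \<le> r"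
  unfolding trunc_def by blast

lemma circuit_card:
  assumes m: "matroid E M" and c: "circuit E M C"
  shows "card C \<le> rank M C + 1"
proof -
  have CE: "C \<subseteq> E" and CM: "C \<notin> M" and sub: "\<And>D. D \<subset> C \<Longrightarrow> D \<in> M"
    using c unfolding circuit_def by blast+
  have "C \<noteq> {}" using CM memp[OF m] by blast
  then obtain x where x: "x \<in> C" by blast
  have fC: "finite C" using CE mfin[OF m] finite_subset by blast
  have "C - {x} \<in> M" using sub x by blast
  then have "card (C - {x}) \<le> rank M C" using rank_ge[OF m] by blast
  then show ?thesis using x fC by simp
qed

lemma dep_has_circuit:
  assumes m: "matroid E M" and XE: "X \<subseteq> E" and XM: "X \<notin> M"
  shows "\<exists>C. C \<subseteq> X \<and> circuit E M C"
proof -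
  let ?D = "{Y. Y \<subseteq> X \<and> Y \<notin> M}"
  have fX: "finite X" using XE mfin[OF m] finite_subset by blast
  have "?D \<subseteq> Pow X" by blast
  then have "finite ?D" using fX finite_subset by blast
  moreover have "?D \<noteq> {}" using XM by blast
  ultimately have "\<exists>m\<in>?D. \<forall>b\<in>?D. b \<le> m \<longrightarrow> m = b" by (rule finite_has_minimal)
  then obtain C where C: "C \<in> ?D" "\<forall>b\<in>?D. b \<le> C \<longrightarrow> C = b"
    by blast
  have "circuit E M C" unfolding circuit_def
  proof (intro conjI allI impI)
    show "C \<subseteq> E" using C XE by blast
    show "C \<notin> M" using C by blast
    fix D assume DC: "D \<subset> C"
    show "D \<in> M"
    proof (rule ccontr)
      assume "D \<notin> M"
      then have "D \<in> ?D" using DC C(1) by blast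
      then have "C = D" using C(2) DC by blast
      then show False using DC by blast
    qed
  qed
  then show ?thesis using C by blast
qed

lemma dep_rank_less:
  assumes m: "matroid E M" and CE: "C \<subseteq> E" and CM: "C \<notin> M"
  shows "rank M C < card C"
proof -
  obtain Y where Y: "Y \<in> M" "Y \<subseteq> C" "card Y = rank M C" using rank_wit[OF m] by blast
  have fC: "finite C" using CE mfin[OF m] finite_subset by blast
  have "Y \<subset> C" using Y CM by blast
  then show ?thesis using psubset_card_mono[OF fC \<open>Y \<subset> C\<close>] Y(3) by simp
qed

theorem lemma3p1:
  fixes E :: "'a set" and M0 :: "'a set set"
  assumes "matroid E M0"
  defines "\<C>0 \<equiv> {C. circuit E M0 C \<and> rank M0 C < rank M0 E}"
  shows "C_matroid E \<C>0 (free_elevation E M0)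
    \<and> \<not> (\<exists>N. C_matroid E \<C>0 N \<and> free_elevation E M0 \<subset> N)"
proof -
  have m0: "matroid E M0" using assms(1) .
  have C0mem: "\<And>C. C \<in> \<C>0 \<longleftrightarrow> circuit E M0 C \<and> rank M0 C < rank M0 E"
    unfolding \<C>0_def by simp
  define S where "S = erection_seq E M0"
  have S0: "S 0 = M0" and SS: "\<And>n. S (Suc n) = free_erection E (S n)"
    unfolding S_def by simp_all
  have mS: "matroid E (S n)" for n
  proof (induction n)
    case 0 then show ?case using m0 S0 by simp
  next
    case (Suc n)
    have "is_erection E (S n) (S (Suc n))" using fe[OF Suc] SS by simp
    then show ?case using er_matroid[OF Suc] by blast
  qed
  have esS: "is_erection E (S n) (S (Suc n))" for n using fe[OF mS[of n]] SS by simp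
  have subS: "S n \<subseteq> S (Suc n)" for n using er_sub[OF esS] .
  have mono: "i \<le> j \<Longrightarrow> S i \<subseteq> S j" for i j
    using lift_Suc_mono_le[of S, OF subS] by blast
  have stepT: "is_truncation E (S n) (S (Suc n))" if "\<exists>N. is_truncation E (S n) N" for n
    using that fe_nontriv[OF mS[of n]] SS by auto
  have ex: "\<exists>n. \<not> (\<exists>N. is_truncation E (S n) N)"
  proof (rule ccontr)
    assume "\<not> (\<exists>n. \<not> (\<exists>N. is_truncation E (S n) N))"
    then have all: "\<And>n. \<exists>N. is_truncation E (S n) N" by blast
    have rk: "rank (S n) E = rank M0 E + n" for n
    proof (induction n)
      case 0 then show ?case using S0 by simp
    next
      case (Suc n)
      then show ?case using trD(3)[OF stepT[OF all[of n]]] by simp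
    qed
    have "rank (S (Suc (card E))) E \<le> card E"
      using rank_le_card[OF mS mfin[OF m0]] .
    then show False using rk[of "Suc (card E)"] by simp
  qed
  define k where "k = (LEAST n. \<not> (\<exists>N. is_truncation E (S n) N))"
  have fek: "free_elevation E M0 = S k"
    unfolding free_elevation_def k_def S_def by simp
  have nok: "\<not> (\<exists>N. is_truncation E (S k) N)"
    unfolding k_def by (rule LeastI_ex[OF ex])
  have lt: "is_truncation E (S i) (S (Suc i))" if "i < k" for i
  proof -
    have "\<exists>N. is_truncation E (S i) N"
      using not_less_Least[of i "\<lambda>n. \<not> (\<exists>N. is_truncation E (S n) N)"] that
      unfolding k_def by blast
    then show ?thesis by (rule stepT)
  qed
  have circ: "circuit E (S n) C \<and> card C \<le> rank (S n) E" if C: "C \<in> \<C>0" for C n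
  proof (induction n)
    case 0
    have c: "circuit E M0 C" and r: "rank M0 C < rank M0 E" using C C0mem by blast+
    have "card C \<le> rank M0 C + 1" using circuit_card[OF m0 c] .
    then show ?case using c r S0 by simp
  next
    case (Suc n)
    have "is_truncation E (S n) (S (Suc n)) \<or> S (Suc n) = S n"
      using esS[of n] unfolding is_erection_def by blast
    then show ?case
    proof
      assume "S (Suc n) = S n" then show ?case using Suc by simp
    next
      assume t: "is_truncation E (S n) (S (Suc n))"
      have q: "\<And>X. X \<in> S n \<longleftrightarrow> X \<in> S (Suc n) \<and> card X \<le> rank (S n) E"
        using trunc_mem[OF trD(4)[OF t]] .
      have r: "rank (S (Suc n)) E = rank (S n) E + 1" using trD(3)[OF t] .
      have cn: "C \<subseteq> E" "C \<notin> S n" "\<And>D. D \<subset> C \<Longrightarrow> D \<in> S n"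
        using Suc unfolding circuit_def by blast+
      have "circuit E (S (Suc n)) C" unfolding circuit_def
        using cn q Suc by blast
      then show ?case using Suc r by simp
    qed
  qed
  have P1: "C_matroid E \<C>0 (S k)"
    unfolding C_matroid_def using mS circ by blast
  have P2: "\<not> (\<exists>N. C_matroid E \<C>0 N \<and> S k \<subset> N)"
  proof
    assume "\<exists>N. C_matroid E \<C>0 N \<and> S k \<subset> N"
    then obtain N where cN: "C_matroid E \<C>0 N" and kN: "S k \<subset> N" by blast
    have mN: "matroid E N" and cC: "\<And>C. C \<in> \<C>0 \<Longrightarrow> circuit E N C"
      using cN unfolding C_matroid_def by blast+
    have SN: "S i \<subseteq> N" if "i \<le> k" for i using mono[OF that] kN by blast
    have tr: "i \<le> k \<Longrightarrow> S i = trunc (rank (S i) E) N" for i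
    proof (induction i)
      case 0
      show ?case
      proof (intro set_eqI iffI)
        fix X assume X: "X \<in> S 0"
        then show "X \<in> trunc (rank (S 0) E) N"
          using SN[of 0] card_le_rankE[OF mS X] unfolding trunc_def by auto
      next
        fix X assume X: "X \<in> trunc (rank (S 0) E) N"
        then have XN: "X \<in> N" and c: "card X \<le> rank M0 E" unfolding trunc_def S0 by auto
        have XE: "X \<subseteq> E" using XN mpow[OF mN] by blast
        show "X \<in> S 0"
        proof (rule ccontr)
          assume "X \<notin> S 0"
          then have "X \<notin> M0" using S0 by simp
          then obtain C where CX: "C \<subseteq> X" and cc: "circuit E M0 C"
            using dep_has_circuit[OF m0 XE] by blast
          have CE: "C \<subseteq> E" and CM: "C \<notin> M0" using cc unfolding circuit_def by blast+
          have "rank M0 C < card C" using dep_rank_less[OF m0 CE CM] .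
          moreover have "card C \<le> card X" using CX card_mono mfinX[OF mN XN] by blast
          ultimately have "C \<in> \<C>0" using C0mem cc c by simp
          then have "C \<notin> N" using cC unfolding circuit_def by blast
          then show False using mdown[OF mN XN CX] by blast
        qed
      qed
    next
      case (Suc i)
      have ik: "i < k" using Suc.prems by simp
      have IH: "S i = trunc (rank (S i) E) N" using ik by (intro Suc.IH) simp
      have t: "is_truncation E (S i) (S (Suc i))" using lt[OF ik] .
      have r: "rank (S (Suc i)) E = rank (S i) E + 1" using trD(3)[OF t] .
      obtain Y where Y: "Y \<in> S (Suc i)" "card Y = rank (S (Suc i)) E"
        using rank_wit[OF mS] by blast
      have YN: "Y \<in> N" using Y(1) SN[OF Suc.prems] by blast
      have t2: "is_truncation E (S i) (trunc (rank (S i) E + 1) N)"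
        using TR[OF mN mS IH YN] Y(2) r by simp
      then have "trunc (rank (S i) E + 1) N \<subseteq> free_erection E (S i)"
        using fe[OF mS[of i]] unfolding is_erection_def by blast
      then have A: "trunc (rank (S (Suc i)) E) N \<subseteq> S (Suc i)" using SS r by simp
      have B: "S (Suc i) \<subseteq> trunc (rank (S (Suc i)) E) N"
        using SN[OF Suc.prems] card_le_rankE[OF mS] unfolding trunc_def by blast
      show ?case using A B by blast
    qed
    have trk: "S k = trunc (rank (S k) E) N" by (rule tr) simp
    show False
    proof (cases "\<exists>Y\<in>N. rank (S k) E < card Y")
      case True
      then obtain Y where Y: "Y \<in> N" "rank (S k) E < card Y" by blast
      obtain Y' where Y': "Y' \<subseteq> Y" "card Y' = rank (S k) E + 1"
        using obtain_subset_with_card_n[of "rank (S k) E + 1" Y] Y(2) by auto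
      have "Y' \<in> N" using mdown[OF mN Y(1) Y'(1)] .
      then have "is_truncation E (S k) (trunc (rank (S k) E + 1) N)"
        using TR[OF mN mS trk] Y'(2) by blast
      then show False using nok by blast
    next
      case False
      then have "N \<subseteq> S k" using trunc_mem[OF trk] by force
      then show False using kN by blast
    qed
  qed
  show ?thesis using P1 P2 fek by simp
qed

end
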